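(* There exists a function $\ell\in C^2(\overline{\mathcal{S}})$ with $\ell<0$ on $\overline{\mathcal{S}}$ and $\ell(x,y)\to-\infty$ as $\|(x,y)\|\to\infty$ within $\overline{\mathcal{S}}$, which is a strict classical subsolution of the HJB inequality in $\mathcal{S}$, i.e. for all $(x,y)\in\mathcal{S}$: $$\mathcal{L}\ell(x,y)<0,\qquad -(1-\mu)\ell_x(x,y)+\ell_y(x,y)<0,\qquad \ell_x(x,y)-(1-\lambda)\ell_y(x,y)<0.$$ (For instance, $\ell(x,y)=-\frac{(x+ky-b+1)^p}{p}$ with any $k\in(1-\mu,\frac{1}{1-\lambda})$ and $p\in(0,1)$ sufficiently small.)
   Context: Constants $r>0$, $\alpha>r$, $\sigma>0$, $\beta>0$, $\lambda,\mu\in(0,1)$, $c>0$, $b<c/r$. $L(x,y):=x+(1-\mu)y^+-\frac{1}{1-\lambda}y^-$, $\mathcal{S}_a:=\{(x,y)\in\mathbb{R}^2:L(x,y)>a\}$, $\mathcal{S}:=\mathcal{S}_b\setminus\overline{\mathcal{S}_{c/r}}$ (closures in $\mathbb{R}^2$). For $\varphi\in C^2$, $\mathcal{L}\varphi:=\beta\varphi-(rx-c)\varphi_x-\alpha y\varphi_y-\frac12\sigma^2y^2\varphi_{yy}$. *)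

theory Defs
  imports "HOL-Analysis.Analysis"
begin

definition Lval :: "real \<Rightarrow> real \<Rightarrow> real \<Rightarrow> real \<Rightarrow> real" where
  "Lval lam mu x y = x + (1 - mu) * max y 0 - (1 / (1 - lam)) * max (- y) 0"

definition Sa :: "real \<Rightarrow> real \<Rightarrow> real \<Rightarrow> (real \<times> real) set" where
  "Sa lam mu a = {(x, y). Lval lam mu x y > a}"

definition Sreg :: "real \<Rightarrow> real \<Rightarrow> real \<Rightarrow> real \<Rightarrow> real \<Rightarrow> (real \<times> real) set" where
  "Sreg lam mu b c r = Sa lam mu b - closure (Sa lam mu (c / r))"

text \<open>The operator L applied to a C^2 function, given its value, first partials and
  the second partial in y.\<close>
definition Lop :: "real \<Rightarrow> real \<Rightarrow> real \<Rightarrow> real \<Rightarrow> real \<Rightarrow> real \<Rightarrow> real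
                   \<Rightarrow> real \<Rightarrow> real \<Rightarrow> real \<Rightarrow> real \<Rightarrow> real" where
  "Lop beta r c alpha sig x y v vx vy vyy =
     beta * v - (r * x - c) * vx - alpha * y * vy - (1/2) * sig^2 * y^2 * vyy"

end

theory Submission
  imports Defs
begin

lemma d1: fixes M b :: real assumes "fst z + snd z - b + 1 > 0"
  shows "((\<lambda>z. -M - ln (fst z + snd z - b + 1)) has_derivative
   (\<lambda>(h, k). (-1/(fst z + snd z - b + 1)) * h + (-1/(fst z + snd z - b + 1)) * k)) (at z)"
  using assms
  apply (auto intro!: derivative_eq_intros simp: fun_eq_iff split: prod.splits)
  by (simp_all add: power2_eq_square add_divide_distrib divide_inverse algebra_simps)

lemma d2: fixes b :: real assumes "fst z + snd z - b + 1 > 0"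
  shows "((\<lambda>z. -1/(fst z + snd z - b + 1)) has_derivative
   (\<lambda>(h, k). (1/(fst z + snd z - b + 1)^2) * h + (1/(fst z + snd z - b + 1)^2) * k)) (at z)"
  using assms
  apply (auto intro!: derivative_eq_intros simp: fun_eq_iff split: prod.splits)
  by (simp_all add: power2_eq_square add_divide_distrib divide_inverse algebra_simps)

lemma opneg:
  fixes w x y M beta r c alpha sig b :: real
  assumes w: "w \<ge> 1" and "beta > 0" and "sig > 0" and rb: "r * b < c" and "r > 0"
    and M: "M = (r + (alpha - r)^2 / (2 * sig^2)) / beta + 1"
    and x: "x = w - 1 + b - y"
  shows "beta * (-M - ln w) - (r * x - c) * (-1/w) - alpha * y * (-1/w)
          - 1/2 * sig^2 * y^2 * (1/w^2) < 0"
proof -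
  define t where "t = y / w"
  have wp: "w > 0" using w by simp
  have sq: "(alpha - r) * t - 1/2 * sig^2 * t^2 \<le> (alpha - r)^2 / (2 * sig^2)"
  proof -
    have "0 \<le> (sig * t - (alpha - r) / sig)^2 / 2" by simp
    also have "\<dots> = 1/2 * sig^2 * t^2 - (alpha - r) * t + (alpha - r)^2 / (2 * sig^2)"
      using \<open>sig > 0\<close> by (simp add: power2_eq_square field_simps)
    finally show ?thesis by simp
  qed
  have exp: "- (r * x - c) * (-1/w) - alpha * y * (-1/w) - 1/2 * sig^2 * y^2 * (1/w^2)
      = r + (r * (b - 1) - c) / w + ((alpha - r) * t - 1/2 * sig^2 * t^2)"
    using wp unfolding t_def x by (simp add: field_simps power2_eq_square)
  have bM: "beta * M = r + (alpha - r)^2 / (2 * sig^2) + beta"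
    using M \<open>beta > 0\<close> by (simp add: field_simps)
  have ln: "ln w \<ge> 0" using w by simp
  have "beta * ln w \<ge> 0" using ln \<open>beta > 0\<close> by simp
  have neg: "(r * (b - 1) - c) / w < 0"
    using wp rb \<open>r > 0\<close> by (intro divide_neg_pos) (auto simp: algebra_simps)
  have "beta * (-M - ln w) = - (beta * M) - beta * ln w" by (simp add: algebra_simps)
  then show ?thesis using exp bM neg sq \<open>beta * ln w \<ge> 0\<close> \<open>beta > 0\<close> by linarith
qed

theorem mainTheorem13:
  fixes r alpha sig beta lam mu c b :: real
  assumes "r > 0" and "alpha > r" and "sig > 0" and "beta > 0"
    and "0 < lam" and "lam < 1" and "0 < mu" and "mu < 1"
    and "c > 0" and "b < c / r"
  shows "\<exists>(l :: real \<times> real \<Rightarrow> real) lx ly lxx lxy lyx lyy U.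
     open U \<and> closure (Sreg lam mu b c r) \<subseteq> U \<and>
     (\<forall>z\<in>U. (l has_derivative (\<lambda>(h, k). lx z * h + ly z * k)) (at z)) \<and>
     (\<forall>z\<in>U. (lx has_derivative (\<lambda>(h, k). lxx z * h + lxy z * k)) (at z)) \<and>
     (\<forall>z\<in>U. (ly has_derivative (\<lambda>(h, k). lyx z * h + lyy z * k)) (at z)) \<and>
     continuous_on U lxx \<and> continuous_on U lxy \<and>
     continuous_on U lyx \<and> continuous_on U lyy \<and>
     (\<forall>z\<in>closure (Sreg lam mu b c r). l z < 0) \<and>
     (\<forall>M. \<exists>R. \<forall>z\<in>closure (Sreg lam mu b c r). norm z > R \<longrightarrow> l z < - M) \<and>
     (\<forall>x y. (x, y) \<in> Sreg lam mu b c r \<longrightarrow>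
        Lop beta r c alpha sig x y (l (x, y)) (lx (x, y)) (ly (x, y)) (lyy (x, y)) < 0 \<and>
        - (1 - mu) * lx (x, y) + ly (x, y) < 0 \<and>
        lx (x, y) - (1 - lam) * ly (x, y) < 0)"
proof -
  define M where "M = (r + (alpha - r)^2 / (2 * sig^2)) / beta + 1"
  define W where "W = (\<lambda>z::real\<times>real. fst z + snd z - b + 1)"
  define l where "l = (\<lambda>z. - M - ln (W z))"
  define lx where "lx = (\<lambda>z. -1 / W z)"
  define lxx where "lxx = (\<lambda>z. 1 / (W z)^2)"
  define U where "U = {z. W z > 0}"
  define C where "C = ({z::real\<times>real. snd z \<ge> 0} \<inter> {z. fst z + (1 - mu) * snd z \<ge> b})
     \<union> ({z. snd z \<le> 0} \<inter> {z. fst z + snd z / (1 - lam) \<ge> b})"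
  have rb: "r * b < c" using assms by (simp add: pos_less_divide_eq mult.commute)
  have Mpos: "M > 0" unfolding M_def using assms by (simp add: add_pos_nonneg)
  have SC: "Sreg lam mu b c r \<subseteq> C"
  proof
    fix z assume z: "z \<in> Sreg lam mu b c r"
    obtain x y where zz: "z = (x, y)" by fastforce
    have L: "Lval lam mu x y > b" using z zz unfolding Sreg_def Sa_def by auto
    show "z \<in> C"
    proof (cases "y \<ge> 0")
      case True
      then show ?thesis using L unfolding C_def zz Lval_def by auto
    next
      case False
      then have "Lval lam mu x y = x + y / (1 - lam)" unfolding Lval_def by auto
      then show ?thesis using L False unfolding C_def zz by auto
    qed
  qed
  have Cclosed: "closed C" unfolding C_def
    using assms by (intro closed_Un closed_Int closed_Collect_le continuous_intros) auto
  have clC: "closure (Sreg lam mu b c r) \<subseteq> C" using SC Cclosed by (simp add: closure_minimal)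
  have W1: "W z \<ge> 1" if "z \<in> C" for z
  proof -
    obtain x y where zz: "z = (x, y)" by fastforce
    show ?thesis
    proof (cases "y \<ge> 0")
      case True
      then have "x + (1 - mu) * y \<ge> b" using that unfolding C_def zz by auto
      moreover have "mu * y \<ge> 0" using True assms by simp
      ultimately show ?thesis unfolding W_def zz by (simp add: algebra_simps)
    next
      case False
      then have h: "x + y / (1 - lam) \<ge> b" using that unfolding C_def zz by auto
      have "y / (1 - lam) = y + lam * (y / (1 - lam))" using assms by (simp add: field_simps)
      moreover have "y / (1 - lam) \<le> 0" using False assms by (simp add: divide_nonpos_pos)
      moreover have "lam * (y / (1 - lam)) \<le> 0" using calculation(2) assms mult_nonneg_nonpos[of lam "y / (1 - lam)"] by linarith
      ultimately have "x + y \<ge> b" using h by linarith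
      then show ?thesis unfolding W_def zz by simp
    qed
  qed
  have openU: "open U" unfolding U_def W_def by (intro open_Collect_less continuous_intros)
  have CU: "C \<subseteq> U" unfolding U_def using W1 by fastforce
  have dl: "\<forall>z\<in>U. (l has_derivative (\<lambda>(h, k). lx z * h + lx z * k)) (at z)"
    unfolding U_def l_def lx_def W_def using d1 by auto
  have dlx: "\<forall>z\<in>U. (lx has_derivative (\<lambda>(h, k). lxx z * h + lxx z * k)) (at z)"
    unfolding U_def lxx_def lx_def W_def using d2 by auto
  have clxx: "continuous_on U lxx" unfolding U_def lxx_def W_def
    by (intro continuous_intros) auto
  have lneg: "\<forall>z\<in>closure (Sreg lam mu b c r). l z < 0"
  proof
    fix z assume "z \<in> closure (Sreg lam mu b c r)"
    then have "W z \<ge> 1" using clC W1 by (meson subsetD)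
    then have "ln (W z) \<ge> 0" by simp
    then show "l z < 0" unfolding l_def using Mpos by simp
  qed
  have linf: "\<forall>M'. \<exists>R. \<forall>z\<in>closure (Sreg lam mu b c r). norm z > R \<longrightarrow> l z < - M'"
  proof
    fix M'
    define E where "E = exp (M' - M)"
    define T where "T = 2 * \<bar>b\<bar> + \<bar>c / r\<bar> + \<bar>E\<bar> + 1"
    define R where "R = T + 4 * T / mu + 4 * T / lam"
    show "\<exists>R. \<forall>z\<in>closure (Sreg lam mu b c r). norm z > R \<longrightarrow> l z < - M'"
    proof (intro exI[of _ R] ballI impI)
      fix z assume zc: "z \<in> closure (Sreg lam mu b c r)" and nz: "norm z > R"
      have zC: "z \<in> C" using zc clC by auto
      have Wp: "W z > 0" using W1[OF zC] by simp
      show "l z < - M'"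
      proof (rule ccontr)
        assume "\<not> l z < - M'"
        then have "ln (W z) \<le> M' - M" unfolding l_def by simp
        then have WE: "W z \<le> E" unfolding E_def using Wp
          by (metis exp_ln exp_le_cancel_iff)
        obtain x y where zz: "z = (x, y)" by fastforce
        have uE: "x + y \<le> E + b - 1" using WE unfolding W_def zz by simp
        have W1': "x + y \<ge> b" using W1[OF zC] unfolding W_def zz by simp
        have Tb: "b \<le> T" "- b \<le> T" "E + b - 1 \<le> T" "- T \<le> b" "T \<ge> 0"
        proof -
          have "b \<le> \<bar>b\<bar>" "- b \<le> \<bar>b\<bar>" "E \<le> \<bar>E\<bar>" "0 \<le> \<bar>c / r\<bar>" "0 \<le> \<bar>E\<bar>" "0 \<le> \<bar>b\<bar>" by auto
          then show "b \<le> T" "- b \<le> T" "E + b - 1 \<le> T" "- T \<le> b" "T \<ge> 0"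
            unfolding T_def by linarith+
        qed
        have uT: "\<bar>x + y\<bar> \<le> T" using W1' uE Tb unfolding abs_le_iff by linarith
        have T0: "T \<ge> 0" unfolding T_def by simp
        have "2 * T / mu \<ge> 0" "2 * T / lam \<ge> 0" using T0 assms by auto
        have ay: "\<bar>y\<bar> \<le> 2 * T / mu + 2 * T / lam"
        proof (cases "y \<ge> 0")
          case True
          then have "x + (1 - mu) * y \<ge> b" using zC unfolding C_def zz by auto
          then have "mu * y \<le> (x + y) - b" by (simp add: algebra_simps)
          then have "mu * y \<le> 2 * T" using uT Tb unfolding abs_le_iff by linarith
          then have "y \<le> 2 * T / mu" using assms by (simp add: field_simps)
          then show ?thesis using True \<open>2 * T / lam \<ge> 0\<close> by auto
        next
          case False
          then have h: "x + y / (1 - lam) \<ge> b" using zC unfolding C_def zz by auto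
          have e: "y / (1 - lam) = y + lam * (y / (1 - lam))" using assms by (simp add: field_simps)
          have "lam * (- y / (1 - lam)) \<le> (x + y) - b" 
          proof -
            have "lam * (- y / (1 - lam)) = - (lam * (y / (1 - lam)))" by simp
            then show ?thesis using h e by linarith
          qed
          then have "lam * (- y / (1 - lam)) \<le> 2 * T" using uT Tb unfolding abs_le_iff by linarith
          then have "- y / (1 - lam) \<le> 2 * T / lam" using assms by (simp add: field_simps)
          moreover have "- y \<le> - y / (1 - lam)"
          proof -
            have q: "y / (1 - lam) \<le> 0" using False assms by (simp add: divide_nonpos_pos)
            have "lam * (y / (1 - lam)) \<le> 0" using q assms mult_nonneg_nonpos[of lam "y / (1 - lam)"] by linarith
            then show ?thesis using e by simp
          qed
          ultimately show ?thesis using False \<open>2 * T / mu \<ge> 0\<close> by auto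
        qed
        have "norm z \<le> norm x + norm y" unfolding zz by (rule norm_Pair_le)
        also have "\<dots> \<le> \<bar>x + y\<bar> + 2 * \<bar>y\<bar>" by auto
        also have "\<dots> \<le> R" using uT ay unfolding R_def by auto
        finally show False using nz by simp
      qed
    qed
  qed
  have hjb: "\<forall>x y. (x, y) \<in> Sreg lam mu b c r \<longrightarrow>
        Lop beta r c alpha sig x y (l (x, y)) (lx (x, y)) (lx (x, y)) (lxx (x, y)) < 0 \<and>
        - (1 - mu) * lx (x, y) + lx (x, y) < 0 \<and>
        lx (x, y) - (1 - lam) * lx (x, y) < 0"
  proof (intro allI impI conjI)
    fix x y assume "(x, y) \<in> Sreg lam mu b c r"
    then have "(x, y) \<in> C" using SC by auto
    then have w: "W (x, y) \<ge> 1" by (rule W1)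
    have "beta * (-M - ln (W (x,y))) - (r * x - c) * (-1/W (x,y)) - alpha * y * (-1/W (x,y))
          - 1/2 * sig^2 * y^2 * (1/(W (x,y))^2) < 0"
      by (rule opneg[OF w \<open>beta > 0\<close> \<open>sig > 0\<close> rb \<open>r > 0\<close> M_def]) (simp add: W_def)
    then show "Lop beta r c alpha sig x y (l (x, y)) (lx (x, y)) (lx (x, y)) (lxx (x, y)) < 0"
      unfolding Lop_def l_def lx_def lxx_def by simp
    have lxn: "lx (x, y) < 0" unfolding lx_def using w by simp
    show "- (1 - mu) * lx (x, y) + lx (x, y) < 0" using lxn assms
      by (simp add: algebra_simps mult_pos_neg)
    show "lx (x, y) - (1 - lam) * lx (x, y) < 0" using lxn assms
      by (simp add: algebra_simps mult_pos_neg)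
  qed
  show ?thesis
    apply (rule exI[of _ l], rule exI[of _ lx], rule exI[of _ lx], rule exI[of _ lxx],
      rule exI[of _ lxx], rule exI[of _ lxx], rule exI[of _ lxx], rule exI[of _ U])
    using openU clC CU dl dlx clxx lneg linf hjb by blast
qed

end
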